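(* Let $\mathit{VI}$ be a finite set of variables with $\#\mathit{VI}=n$. Let $\mathit{PSD}^{+}=\{sh\in\mathit{PSD}\mid\forall x\in\mathit{VI}:\{x\}\in sh\}$, $\mathit{Def}^{-}=\mathit{PSD}\sim\mathit{PSD}^{+}$, and $\mathit{PSD}^{\ddagger}=\{sh\in\mathit{PSD}\mid\mathit{VI}\in sh,\ \forall x\in\mathit{VI}:\{x\}\in sh\}$. Then $\mathit{Def}^{-}$, $\mathit{PS}$, and $\mathit{PSD}^{\ddagger}$ form a minimal decomposition for $\mathit{PSD}$.
   Context: $\mathit{SG}=\wp(\mathit{VI})\setminus\{\emptyset\}$, $\mathit{SH}=\wp(\mathit{SG})$ ordered by inclusion. $\mathrm{pairs}(S)=\{T\subseteq S\mid\#T=2\}$, $\mathrm{pairs}(sh)=\bigcup_{S'\in sh}\mathrm{pairs}(S')$, $\mathit{PS}=\{\rho_{\mathit{PS}}(sh)\mid sh\in\mathit{SH}\}$ with $\rho_{\mathit{PS}}(sh)=\{S\in\mathit{SG}\mid\mathrm{pairs}(S)\subseteq\mathrm{pairs}(sh)\}$. $\mathit{PSD}=\{\rho_{\mathit{PSD}}(sh)\mid sh\in\mathit{SH}\}$ with $\rho_{\mathit{PSD}}(sh)=\{\,S\in\mathit{SG}\mid \forall T\subseteq S:\ \#T<2\implies S=\bigcup\{U\in sh\mid T\subseteq U\subseteq S\}\,\}$; it is a complete lattice under inclusion. Upper closure operators on a complete lattice $C$ are identified with their images (subsets closed under arbitrary meets); $\mathrm{uco}(C)$ is ordered by $\rho_1\sqsubseteq\rho_2$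 iff $\rho_2(C)\subseteq\rho_1(C)$, with reduced product $\sqcap$ the glb (image = meet-closure of the union of images). For $D\subseteq C$ the image of some $\rho\in\mathrm{uco}(C)$, $C\sim D=\mathrm{lub}\{\rho_2\in\mathrm{uco}(C)\mid\rho\sqcap\rho_2=\mathit{id}_C\}$. A family $D_1,\dots,D_m$ of such images is a decomposition of $C$ if $C=D_1\sqcap\dots\sqcap D_m$; it is minimal if for each $i$ and each $E_i\in\mathrm{uco}(C)$ with $D_i\sqsubset E_i$, one has $C\sqsubset D_1\sqcap\dots\sqcap D_{i-1}\sqcap E_i\sqcap D_{i+1}\sqcap\dots\sqcap D_m$. *)

theory Defs
  imports Main
begin

definition SG :: "'a set \<Rightarrow> 'a set set" where
  "SG VI = Pow VI - {{}}"

definition SH :: "'a set \<Rightarrow> 'a set set set" where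
  "SH VI = Pow (SG VI)"

definition pairs :: "'a set \<Rightarrow> 'a set set" where
  "pairs S = {T. T \<subseteq> S \<and> card T = 2}"

definition pairs_sh :: "'a set set \<Rightarrow> 'a set set" where
  "pairs_sh sh = (\<Union>S'\<in>sh. pairs S')"

definition rho_PS :: "'a set \<Rightarrow> 'a set set \<Rightarrow> 'a set set" where
  "rho_PS VI sh = {S \<in> SG VI. pairs S \<subseteq> pairs_sh sh}"

definition PS :: "'a set \<Rightarrow> 'a set set set" where
  "PS VI = rho_PS VI ` SH VI"

definition rho_PSD :: "'a set \<Rightarrow> 'a set set \<Rightarrow> 'a set set" where
  "rho_PSD VI sh = {S \<in> SG VI. \<forall>T. T \<subseteq> S \<longrightarrow> card T < 2 \<longrightarrow>
                       S = \<Union>{U \<in> sh. T \<subseteq> U \<and> U \<subseteq> S}}"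

definition PSD :: "'a set \<Rightarrow> 'a set set set" where
  "PSD VI = rho_PSD VI ` SH VI"

definition PSD_plus :: "'a set \<Rightarrow> 'a set set set" where
  "PSD_plus VI = {sh \<in> PSD VI. \<forall>x\<in>VI. {x} \<in> sh}"

definition PSD_ddag :: "'a set \<Rightarrow> 'a set set set" where
  "PSD_ddag VI = {sh \<in> PSD VI. VI \<in> sh \<and> (\<forall>x\<in>VI. {x} \<in> sh)}"

definition is_glb_in :: "'b set set \<Rightarrow> 'b set set \<Rightarrow> 'b set \<Rightarrow> bool" where
  "is_glb_in C X m \<longleftrightarrow> m \<in> C \<and> (\<forall>x\<in>X. m \<subseteq> x) \<and>
                         (\<forall>m'\<in>C. (\<forall>x\<in>X. m' \<subseteq> x) \<longrightarrow> m' \<subseteq> m)"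

definition glb_in :: "'b set set \<Rightarrow> 'b set set \<Rightarrow> 'b set" where
  "glb_in C X = (THE m. is_glb_in C X m)"

text \<open>Images of upper closure operators on C: subsets of C closed under arbitrary meets.\<close>
definition uco_img :: "'b set set \<Rightarrow> 'b set set \<Rightarrow> bool" where
  "uco_img C D \<longleftrightarrow> D \<subseteq> C \<and> (\<forall>X. X \<subseteq> D \<longrightarrow> glb_in C X \<in> D)"

text \<open>Order on uco(C): rho1 below rho2 iff image of rho2 is contained in image of rho1.\<close>
definition uco_le :: "'b set set \<Rightarrow> 'b set set \<Rightarrow> bool" where
  "uco_le D1 D2 \<longleftrightarrow> D2 \<subseteq> D1"

definition uco_less :: "'b set set \<Rightarrow> 'b set set \<Rightarrow> bool" where
  "uco_less D1 D2 \<longleftrightarrow> uco_le D1 D2 \<and> D1 \<noteq> D2"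

text \<open>Meet-closure in C; the reduced product of images is the meet-closure of their union.\<close>
definition mclos :: "'b set set \<Rightarrow> 'b set set \<Rightarrow> 'b set set" where
  "mclos C D = {glb_in C X | X. X \<subseteq> D}"

definition rprod :: "'b set set \<Rightarrow> 'b set set list \<Rightarrow> 'b set set" where
  "rprod C Ds = mclos C (\<Union>(set Ds))"

definition uco_lub :: "'b set set \<Rightarrow> 'b set set set \<Rightarrow> 'b set set" where
  "uco_lub C S = (THE U. uco_img C U \<and> (\<forall>E\<in>S. uco_le E U) \<and>
                  (\<forall>U'. uco_img C U' \<and> (\<forall>E\<in>S. uco_le E U') \<longrightarrow> uco_le U U'))"

text \<open>Pseudo-complement C ~ D; id_C has image C.\<close>
definition uco_compl :: "'b set set \<Rightarrow> 'b set set \<Rightarrow> 'b set set" where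
  "uco_compl C D = uco_lub C {E. uco_img C E \<and> rprod C [D, E] = C}"

definition decomposition :: "'b set set \<Rightarrow> 'b set set list \<Rightarrow> bool" where
  "decomposition C Ds \<longleftrightarrow> (\<forall>D\<in>set Ds. uco_img C D) \<and> C = rprod C Ds"

definition min_decomposition :: "'b set set \<Rightarrow> 'b set set list \<Rightarrow> bool" where
  "min_decomposition C Ds \<longleftrightarrow> decomposition C Ds \<and>
     (\<forall>i < length Ds. \<forall>E. uco_img C E \<and> uco_less (Ds ! i) E \<longrightarrow>
        uco_less C (rprod C (Ds[i := E])))"

end

theory Submission
  imports Defs
begin

definition wit :: "'a set set \<Rightarrow> 'a set \<Rightarrow> bool" where
  "wit sh S \<longleftrightarrow> (\<forall>x\<in>S. \<forall>y\<in>S. \<exists>U\<in>sh. x \<in> U \<and> y \<in> U \<and> U \<subseteq> S)"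

definition pwit :: "'a set set \<Rightarrow> 'a set \<Rightarrow> bool" where
  "pwit p S \<longleftrightarrow> (\<forall>x\<in>S. \<forall>y\<in>S. x \<noteq> y \<longrightarrow> (\<exists>U\<in>p. x \<in> U \<and> y \<in> U))"

definition Gl :: "'a set \<Rightarrow> 'a set set set \<Rightarrow> 'a set set" where
  "Gl VI X = SG VI \<inter> \<Inter>X"

lemma witD: "wit sh S \<Longrightarrow> x \<in> S \<Longrightarrow> y \<in> S \<Longrightarrow> \<exists>U\<in>sh. x \<in> U \<and> y \<in> U \<and> U \<subseteq> S"
  unfolding wit_def by blast

lemma pwitD: "pwit sh S \<Longrightarrow> x \<in> S \<Longrightarrow> y \<in> S \<Longrightarrow> x \<noteq> y \<Longrightarrow> \<exists>U\<in>sh. x \<in> U \<and> y \<in> U"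
  unfolding pwit_def by blast

lemma card_lt2: "finite T \<Longrightarrow> card T < 2 \<Longrightarrow> T = {} \<or> (\<exists>x. T = {x})"
  by (metis One_nat_def card_1_singleton_iff card_0_eq less_2_cases)

lemma SG_iff: "S \<in> SG VI \<longleftrightarrow> S \<subseteq> VI \<and> S \<noteq> {}"
  by (auto simp: SG_def)

lemma rho_PSD_iff:
  assumes "finite VI"
  shows "S \<in> rho_PSD VI sh \<longleftrightarrow> S \<in> SG VI \<and> wit sh S"
proof
  assume a: "S \<in> rho_PSD VI sh"
  hence S: "S \<in> SG VI" by (simp add: rho_PSD_def)
  have h: "\<forall>T. T \<subseteq> S \<longrightarrow> card T < 2 \<longrightarrow> S = \<Union>{U \<in> sh. T \<subseteq> U \<and> U \<subseteq> S}"
    using a by (simp add: rho_PSD_def)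
  have "wit sh S" unfolding wit_def
  proof (intro ballI)
    fix x y assume xy: "x \<in> S" "y \<in> S"
    have hx: "{x} \<subseteq> S" "card {x} < 2" using xy by auto
    have eq: "S = \<Union>{U \<in> sh. {x} \<subseteq> U \<and> U \<subseteq> S}"
      using h hx by (elim allE impE)
    have "y \<in> \<Union>{U \<in> sh. {x} \<subseteq> U \<and> U \<subseteq> S}" using xy(2) by (simp only: eq[symmetric])
    then obtain U where "U \<in> sh" "{x} \<subseteq> U" "U \<subseteq> S" "y \<in> U" by blast
    thus "\<exists>U\<in>sh. x \<in> U \<and> y \<in> U \<and> U \<subseteq> S" by blast
  qed
  with S show "S \<in> SG VI \<and> wit sh S" by simp
next
  assume a: "S \<in> SG VI \<and> wit sh S"
  hence w: "wit sh S" by simp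
  have fin: "finite S" using a assms by (auto simp: SG_def intro: finite_subset)
  have ne: "S \<noteq> {}" using a by (auto simp: SG_def)
  show "S \<in> rho_PSD VI sh" unfolding rho_PSD_def
  proof (intro CollectI conjI allI impI)
    show "S \<in> SG VI" using a by simp
    fix T assume T: "T \<subseteq> S" "card T < 2"
    have "finite T" using fin T finite_subset by blast
    with T have T2: "T = {} \<or> (\<exists>x. T = {x})" using card_lt2 by blast
    show "S = \<Union>{U \<in> sh. T \<subseteq> U \<and> U \<subseteq> S}"
    proof (rule equalityI)
      show "\<Union>{U \<in> sh. T \<subseteq> U \<and> U \<subseteq> S} \<subseteq> S" by blast
      show "S \<subseteq> \<Union>{U \<in> sh. T \<subseteq> U \<and> U \<subseteq> S}"
      proof
        fix y assume y: "y \<in> S"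
        show "y \<in> \<Union>{U \<in> sh. T \<subseteq> U \<and> U \<subseteq> S}"
        proof (cases "T = {}")
          case True
          obtain U where "U \<in> sh" "y \<in> U" "U \<subseteq> S" using witD[OF w y y] by blast
          thus ?thesis using True by blast
        next
          case False
          then obtain x where x: "T = {x}" using T2 by blast
          hence "x \<in> S" using T by simp
          then obtain U where "U \<in> sh" "x \<in> U" "y \<in> U" "U \<subseteq> S" using witD[OF w _ y] by blast
          thus ?thesis using x by blast
        qed
      qed
    qed
  qed
qed

lemma PSD_iff:
  assumes "finite VI"
  shows "sh \<in> PSD VI \<longleftrightarrow> sh \<subseteq> SG VI \<and> (\<forall>S\<in>SG VI. wit sh S \<longrightarrow> S \<in> sh)"
proof
  assume "sh \<in> PSD VI"
  then obtain sh0 where sh: "sh = rho_PSD VI sh0" unfolding PSD_def by blast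
  have 1: "sh \<subseteq> SG VI" unfolding sh rho_PSD_def by blast
  have 2: "S \<in> sh" if sS: "S \<in> SG VI" and wS: "wit sh S" for S
  proof -
    have "wit sh0 S" unfolding wit_def
    proof (intro ballI)
      fix x y assume xy: "x \<in> S" "y \<in> S"
      obtain U where U: "U \<in> sh" "x \<in> U" "y \<in> U" "U \<subseteq> S" using witD[OF wS xy] by blast
      have "U \<in> rho_PSD VI sh0" using U(1) unfolding sh .
      hence "wit sh0 U" using rho_PSD_iff[OF assms] by blast
      then obtain V where "V \<in> sh0" "x \<in> V" "y \<in> V" "V \<subseteq> U" using witD U(2,3) by metis
      thus "\<exists>U\<in>sh0. x \<in> U \<and> y \<in> U \<and> U \<subseteq> S" using U(4) by blast
    qed
    hence "S \<in> rho_PSD VI sh0" using rho_PSD_iff[OF assms] sS by blast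
    thus ?thesis unfolding sh .
  qed
  show "sh \<subseteq> SG VI \<and> (\<forall>S\<in>SG VI. wit sh S \<longrightarrow> S \<in> sh)" using 1 2 by blast
next
  assume a: "sh \<subseteq> SG VI \<and> (\<forall>S\<in>SG VI. wit sh S \<longrightarrow> S \<in> sh)"
  have "rho_PSD VI sh = sh"
  proof
    show "rho_PSD VI sh \<subseteq> sh"
    proof
      fix S assume "S \<in> rho_PSD VI sh"
      hence "S \<in> SG VI" "wit sh S" using rho_PSD_iff[OF assms] by auto
      thus "S \<in> sh" using a by blast
    qed
    show "sh \<subseteq> rho_PSD VI sh"
    proof
      fix S assume S: "S \<in> sh"
      hence "wit sh S" unfolding wit_def by blast
      moreover have "S \<in> SG VI" using a S by blast
      ultimately show "S \<in> rho_PSD VI sh" using rho_PSD_iff[OF assms] by blast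
    qed
  qed
  moreover have "sh \<in> SH VI" using a by (simp add: SH_def)
  ultimately show "sh \<in> PSD VI" unfolding PSD_def by (metis image_eqI)
qed

lemma pairs_iff: "pairs S \<subseteq> pairs_sh sh \<longleftrightarrow> pwit sh S"
proof
  assume a: "pairs S \<subseteq> pairs_sh sh"
  show "pwit sh S" unfolding pwit_def
  proof (intro ballI impI)
    fix x y assume "x \<in> S" "y \<in> S" "x \<noteq> y"
    hence "{x,y} \<in> pairs S" by (auto simp: pairs_def)
    with a have "{x,y} \<in> pairs_sh sh" by blast
    then obtain S' where "S' \<in> sh" "{x,y} \<subseteq> S'" unfolding pairs_sh_def pairs_def by blast
    thus "\<exists>U\<in>sh. x \<in> U \<and> y \<in> U" by blast
  qed
next
  assume a: "pwit sh S"
  show "pairs S \<subseteq> pairs_sh sh"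
  proof
    fix T assume "T \<in> pairs S"
    hence T: "T \<subseteq> S" "card T = 2" by (auto simp: pairs_def)
    then obtain x y where xy: "x \<noteq> y" "T = {x,y}" by (meson card_2_iff)
    have "x \<in> S" "y \<in> S" using T(1) xy(2) by auto
    then obtain U where U: "U \<in> sh" "x \<in> U" "y \<in> U" using pwitD[OF a] xy(1) by blast
    have "T \<subseteq> U" using U xy(2) by blast
    hence "T \<in> pairs U" using T(2) by (simp add: pairs_def)
    thus "T \<in> pairs_sh sh" using U(1) unfolding pairs_sh_def by blast
  qed
qed

lemma rho_PS_iff: "S \<in> rho_PS VI sh \<longleftrightarrow> S \<in> SG VI \<and> pwit sh S"
  unfolding rho_PS_def using pairs_iff by blast

lemma PS_iff: "p \<in> PS VI \<longleftrightarrow> p \<subseteq> SG VI \<and> (\<forall>S\<in>SG VI. pwit p S \<longrightarrow> S \<in> p)"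
proof
  assume "p \<in> PS VI"
  then obtain sh0 where sh: "p = rho_PS VI sh0" unfolding PS_def by blast
  have 1: "p \<subseteq> SG VI" unfolding sh rho_PS_def by blast
  have 2: "S \<in> p" if sS: "S \<in> SG VI" and wS: "pwit p S" for S
  proof -
    have "pwit sh0 S" unfolding pwit_def
    proof (intro ballI impI)
      fix x y assume xy: "x \<in> S" "y \<in> S" "x \<noteq> y"
      obtain U where U: "U \<in> p" "x \<in> U" "y \<in> U" using pwitD[OF wS xy] by blast
      have "U \<in> rho_PS VI sh0" using U(1) unfolding sh .
      hence "pwit sh0 U" using rho_PS_iff by blast
      thus "\<exists>U\<in>sh0. x \<in> U \<and> y \<in> U" using pwitD U(2,3) xy(3) by metis
    qed
    hence "S \<in> rho_PS VI sh0" using rho_PS_iff sS by blast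
    thus ?thesis unfolding sh .
  qed
  show "p \<subseteq> SG VI \<and> (\<forall>S\<in>SG VI. pwit p S \<longrightarrow> S \<in> p)" using 1 2 by blast
next
  assume a: "p \<subseteq> SG VI \<and> (\<forall>S\<in>SG VI. pwit p S \<longrightarrow> S \<in> p)"
  have "rho_PS VI p = p"
  proof
    show "rho_PS VI p \<subseteq> p"
    proof
      fix S assume "S \<in> rho_PS VI p"
      hence "S \<in> SG VI" "pwit p S" using rho_PS_iff by auto
      thus "S \<in> p" using a by blast
    qed
    show "p \<subseteq> rho_PS VI p"
    proof
      fix S assume S: "S \<in> p"
      hence "pwit p S" unfolding pwit_def by blast
      moreover have "S \<in> SG VI" using a S by blast
      ultimately show "S \<in> rho_PS VI p" using rho_PS_iff by blast
    qed
  qed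
  moreover have "p \<in> SH VI" using a by (simp add: SH_def)
  ultimately show "p \<in> PS VI" unfolding PS_def by (metis image_eqI)
qed

lemma glb_eq:
  assumes "X \<subseteq> C" "C \<subseteq> Pow (SG VI)" "Gl VI X \<in> C"
  shows "glb_in C X = Gl VI X"
proof -
  have g: "is_glb_in C X (Gl VI X)" unfolding is_glb_in_def
  proof (intro conjI ballI impI)
    show "Gl VI X \<in> C" by (rule assms(3))
    show "Gl VI X \<subseteq> x" if "x \<in> X" for x using that unfolding Gl_def by auto
    show "m' \<subseteq> Gl VI X" if "m' \<in> C" "\<forall>x\<in>X. m' \<subseteq> x" for m'
    proof -
      have "m' \<subseteq> SG VI" using that(1) assms(2) by auto
      thus ?thesis using that(2) unfolding Gl_def by auto
    qed
  qed
  have u: "m = Gl VI X" if "is_glb_in C X m" for m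
  proof (rule antisym)
    have "m \<in> C" "\<forall>x\<in>X. m \<subseteq> x" using that unfolding is_glb_in_def by simp_all
    thus "m \<subseteq> Gl VI X" using g unfolding is_glb_in_def by simp
    have "Gl VI X \<in> C" "\<forall>x\<in>X. Gl VI X \<subseteq> x" using g unfolding is_glb_in_def by simp_all
    thus "Gl VI X \<subseteq> m" using that unfolding is_glb_in_def by simp
  qed
  show ?thesis unfolding glb_in_def using g u by (rule the_equality)
qed

definition E0 :: "'a set \<Rightarrow> 'a set set set" where
  "E0 VI = {D. D \<subseteq> SG VI \<and> (\<forall>S\<in>SG VI. S \<notin> D \<longrightarrow> (\<exists>x. S = {x}))}"

definition cxy :: "'a set \<Rightarrow> 'a \<Rightarrow> 'a \<Rightarrow> 'a set set" where
  "cxy VI x y = {S \<in> SG VI. \<not> {x,y} \<subseteq> S}"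

lemma wit_mono: "wit A S \<Longrightarrow> A \<subseteq> B \<Longrightarrow> wit B S"
  unfolding wit_def by (meson subsetD)

lemma pwit_mono: "pwit A S \<Longrightarrow> A \<subseteq> B \<Longrightarrow> pwit B S"
  unfolding pwit_def by (meson subsetD)

lemma wit_from_pairs:
  assumes "S \<noteq> {}" "\<not>(\<exists>x. S = {x})"
    and "\<forall>x\<in>S. \<forall>y\<in>S. x \<noteq> y \<longrightarrow> (\<exists>U\<in>sh. x \<in> U \<and> y \<in> U \<and> U \<subseteq> S)"
  shows "wit sh S"
  unfolding wit_def
proof (intro ballI)
  fix x y assume xy: "x \<in> S" "y \<in> S"
  show "\<exists>U\<in>sh. x \<in> U \<and> y \<in> U \<and> U \<subseteq> S"
  proof (cases "x = y")
    case False thus ?thesis using bspec[OF bspec[OF assms(3) xy(1)] xy(2)] by simp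
  next
    case True
    have "\<exists>z\<in>S. z \<noteq> x"
    proof (rule ccontr)
      assume a: "\<not> (\<exists>z\<in>S. z \<noteq> x)"
      have "S \<subseteq> {x}" using a by blast
      moreover have "{x} \<subseteq> S" using xy(1) by simp
      ultimately have "S = {x}" by (rule equalityI)
      thus False using assms(2) by blast
    qed
    then obtain z where z: "z \<in> S" "z \<noteq> x" by blast
    have "\<exists>U\<in>sh. x \<in> U \<and> z \<in> U \<and> U \<subseteq> S" using bspec[OF bspec[OF assms(3) xy(1)] z(1)] z(2) by simp
    thus ?thesis using True by blast
  qed
qed

context
  fixes VI :: "'a set"
  assumes fin: "finite VI" and ne: "VI \<noteq> {}"
begin

lemma PSD_D: "sh \<in> PSD VI \<Longrightarrow> sh \<subseteq> SG VI \<and> (\<forall>S\<in>SG VI. wit sh S \<longrightarrow> S \<in> sh)"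
  by (rule iffD1[OF PSD_iff[OF fin]])

lemma PSD_sub: "sh \<in> PSD VI \<Longrightarrow> sh \<subseteq> SG VI"
  using PSD_D by simp

lemma PSD_cl: "sh \<in> PSD VI \<Longrightarrow> S \<in> SG VI \<Longrightarrow> wit sh S \<Longrightarrow> S \<in> sh"
  using PSD_D by simp

lemma PSD_I: "sh \<subseteq> SG VI \<Longrightarrow> (\<And>S. S \<in> SG VI \<Longrightarrow> wit sh S \<Longrightarrow> S \<in> sh) \<Longrightarrow> sh \<in> PSD VI"
  by (rule iffD2[OF PSD_iff[OF fin]]) simp

lemma PS_D: "p \<in> PS VI \<Longrightarrow> p \<subseteq> SG VI \<and> (\<forall>S\<in>SG VI. pwit p S \<longrightarrow> S \<in> p)"
  by (rule iffD1[OF PS_iff])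

lemma PS_sub: "p \<in> PS VI \<Longrightarrow> p \<subseteq> SG VI"
  using PS_D by simp

lemma PS_cl: "p \<in> PS VI \<Longrightarrow> S \<in> SG VI \<Longrightarrow> pwit p S \<Longrightarrow> S \<in> p"
  using PS_D by simp

lemma PS_I: "p \<subseteq> SG VI \<Longrightarrow> (\<And>S. S \<in> SG VI \<Longrightarrow> pwit p S \<Longrightarrow> S \<in> p) \<Longrightarrow> p \<in> PS VI"
  by (rule iffD2[OF PS_iff]) simp

lemma Gl_sub: "Gl VI X \<subseteq> SG VI"
  unfolding Gl_def by auto

lemma Gl_le: "p \<in> X \<Longrightarrow> Gl VI X \<subseteq> p"
  unfolding Gl_def by auto

lemma Gl_mem: "S \<in> Gl VI X \<longleftrightarrow> S \<in> SG VI \<and> (\<forall>p\<in>X. S \<in> p)"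
  unfolding Gl_def by auto

lemma Gl_PSD:
  assumes X: "X \<subseteq> PSD VI" shows "Gl VI X \<in> PSD VI"
proof (rule PSD_I[OF Gl_sub])
  fix S assume S: "S \<in> SG VI" and w: "wit (Gl VI X) S"
  have "\<forall>p\<in>X. S \<in> p"
  proof
    fix p assume p: "p \<in> X"
    have wp: "wit p S" by (rule wit_mono[OF w Gl_le[OF p]])
    show "S \<in> p" by (rule PSD_cl[OF subsetD[OF X p] S wp])
  qed
  thus "S \<in> Gl VI X" using S by (simp add: Gl_mem)
qed

lemma PSD_Pow: "PSD VI \<subseteq> Pow (SG VI)"
  using PSD_sub by auto

lemma glb_PSD: "X \<subseteq> PSD VI \<Longrightarrow> glb_in (PSD VI) X = Gl VI X"
  by (rule glb_eq[OF _ PSD_Pow Gl_PSD])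

lemma mclos_iff: "D \<subseteq> PSD VI \<Longrightarrow> sh \<in> mclos (PSD VI) D \<longleftrightarrow> (\<exists>X\<subseteq>D. sh = Gl VI X)"
proof -
  assume D: "D \<subseteq> PSD VI"
  have e: "glb_in (PSD VI) X = Gl VI X" if "X \<subseteq> D" for X
    using glb_PSD[OF order_trans[OF that D]] .
  show ?thesis
  proof
    assume "sh \<in> mclos (PSD VI) D"
    then obtain X where "X \<subseteq> D" "sh = glb_in (PSD VI) X" unfolding mclos_def by blast
    thus "\<exists>X\<subseteq>D. sh = Gl VI X" using e by metis
  next
    assume "\<exists>X\<subseteq>D. sh = Gl VI X"
    then obtain X where "X \<subseteq> D" "sh = Gl VI X" by blast
    hence "sh = glb_in (PSD VI) X" using e by metis
    thus "sh \<in> mclos (PSD VI) D" unfolding mclos_def using \<open>X \<subseteq> D\<close> by blast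
  qed
qed

lemma mclos_sub: "D \<subseteq> PSD VI \<Longrightarrow> mclos (PSD VI) D \<subseteq> PSD VI"
proof
  fix sh assume D: "D \<subseteq> PSD VI" and "sh \<in> mclos (PSD VI) D"
  then obtain X where X: "X \<subseteq> D" "sh = Gl VI X" using mclos_iff by metis
  show "sh \<in> PSD VI" unfolding X(2) by (rule Gl_PSD[OF order_trans[OF X(1) D]])
qed

lemma uco_iff: "uco_img (PSD VI) D \<longleftrightarrow> D \<subseteq> PSD VI \<and> (\<forall>X. X \<subseteq> D \<longrightarrow> Gl VI X \<in> D)"
proof
  assume "uco_img (PSD VI) D"
  hence D: "D \<subseteq> PSD VI" "\<And>X. X \<subseteq> D \<Longrightarrow> glb_in (PSD VI) X \<in> D" unfolding uco_img_def by auto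
  have "Gl VI X \<in> D" if "X \<subseteq> D" for X
    using D(2)[OF that] glb_PSD[OF order_trans[OF that D(1)]] by simp
  thus "D \<subseteq> PSD VI \<and> (\<forall>X. X \<subseteq> D \<longrightarrow> Gl VI X \<in> D)" using D(1) by simp
next
  assume D: "D \<subseteq> PSD VI \<and> (\<forall>X. X \<subseteq> D \<longrightarrow> Gl VI X \<in> D)"
  have "glb_in (PSD VI) X \<in> D" if "X \<subseteq> D" for X
    using D that glb_PSD[OF order_trans[OF that]] by simp
  thus "uco_img (PSD VI) D" unfolding uco_img_def using D by simp
qed

lemma PS_PSD: "PS VI \<subseteq> PSD VI"
proof
  fix p assume p: "p \<in> PS VI"
  show "p \<in> PSD VI"
  proof (rule PSD_I[OF PS_sub[OF p]])
    fix S assume S: "S \<in> SG VI" and w: "wit p S"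
    have "pwit p S" using w unfolding wit_def pwit_def by (meson subsetD)
    thus "S \<in> p" by (rule PS_cl[OF p S])
  qed
qed

lemma sing_SG: "x \<in> VI \<Longrightarrow> {x} \<in> SG VI"
  by (simp add: SG_def)

lemma PS_plus: "PS VI \<subseteq> PSD_plus VI"
proof
  fix p assume p: "p \<in> PS VI"
  have "{x} \<in> p" if "x \<in> VI" for x
  proof -
    have "pwit p {x}" by (simp add: pwit_def)
    thus ?thesis by (rule PS_cl[OF p sing_SG[OF that]])
  qed
  thus "p \<in> PSD_plus VI" using subsetD[OF PS_PSD p] unfolding PSD_plus_def by simp
qed

lemma ddag_plus: "PSD_ddag VI \<subseteq> PSD_plus VI"
  unfolding PSD_ddag_def PSD_plus_def by auto

lemma E0_PSD: "E0 VI \<subseteq> PSD VI"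
proof
  fix D assume D: "D \<in> E0 VI"
  have Dsub: "D \<subseteq> SG VI" and Dn: "\<forall>S\<in>SG VI. S \<notin> D \<longrightarrow> (\<exists>x. S = {x})"
    using D unfolding E0_def by simp_all
  show "D \<in> PSD VI"
  proof (rule PSD_I[OF Dsub])
    fix S assume S: "S \<in> SG VI" and w: "wit D S"
    show "S \<in> D"
    proof (rule ccontr)
      assume n: "S \<notin> D"
      then obtain x where x: "S = {x}" using Dn S by blast
      obtain U where U: "U \<in> D" "x \<in> U" "U \<subseteq> S" using witD[OF w] x by blast
      have "U = S" using U(2,3) x by auto
      thus False using U(1) n by simp
    qed
  qed
qed

lemma uco_E0: "uco_img (PSD VI) (E0 VI)"
  unfolding uco_iff
proof (intro conjI allI impI)
  show "E0 VI \<subseteq> PSD VI" by (rule E0_PSD)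
  fix X assume X: "X \<subseteq> E0 VI"
  have "\<forall>S\<in>SG VI. S \<notin> Gl VI X \<longrightarrow> (\<exists>x. S = {x})"
  proof (intro ballI impI)
    fix S assume S: "S \<in> SG VI" "S \<notin> Gl VI X"
    then obtain p where p: "p \<in> X" "S \<notin> p" unfolding Gl_mem by blast
    have "p \<in> E0 VI" using X p(1) by (rule subsetD)
    thus "\<exists>x. S = {x}" using S(1) p(2) unfolding E0_def by simp
  qed
  thus "Gl VI X \<in> E0 VI" unfolding E0_def using Gl_sub by simp
qed

lemma uco_PS: "uco_img (PSD VI) (PS VI)"
  unfolding uco_iff
proof (intro conjI allI impI)
  show "PS VI \<subseteq> PSD VI" by (rule PS_PSD)
  fix X assume X: "X \<subseteq> PS VI"
  show "Gl VI X \<in> PS VI"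
  proof (rule PS_I[OF Gl_sub])
    fix S assume S: "S \<in> SG VI" and w: "pwit (Gl VI X) S"
    have "\<forall>p\<in>X. S \<in> p"
    proof
      fix p assume p: "p \<in> X"
      have wp: "pwit p S" by (rule pwit_mono[OF w Gl_le[OF p]])
      show "S \<in> p" by (rule PS_cl[OF subsetD[OF X p] S wp])
    qed
    thus "S \<in> Gl VI X" using S by (simp add: Gl_mem)
  qed
qed

lemma VI_SG: "VI \<in> SG VI"
  using ne by (simp add: SG_def)

lemma uco_ddag: "uco_img (PSD VI) (PSD_ddag VI)"
  unfolding uco_iff
proof (intro conjI allI impI)
  show "PSD_ddag VI \<subseteq> PSD VI" unfolding PSD_ddag_def by auto
  fix X assume X: "X \<subseteq> PSD_ddag VI"
  have X': "X \<subseteq> PSD VI" using X unfolding PSD_ddag_def by auto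
  have "\<forall>p\<in>X. VI \<in> p" using X unfolding PSD_ddag_def by auto
  hence "VI \<in> Gl VI X" using VI_SG by (simp add: Gl_mem)
  moreover have "{x} \<in> Gl VI X" if "x \<in> VI" for x
  proof -
    have "\<forall>p\<in>X. {x} \<in> p" using X that unfolding PSD_ddag_def by auto
    thus ?thesis using sing_SG[OF that] by (simp add: Gl_mem)
  qed
  ultimately show "Gl VI X \<in> PSD_ddag VI" unfolding PSD_ddag_def using Gl_PSD[OF X'] by simp
qed

end

context
  fixes VI :: "'a set"
  assumes fin: "finite VI" and ne: "VI \<noteq> {}"
begin

definition sing :: "'a set set" where "sing = {{x} | x. x \<in> VI}"

lemma sing_iff: "S \<in> sing \<longleftrightarrow> (\<exists>x\<in>VI. S = {x})"
  unfolding sing_def by auto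

lemma P_plus:
  assumes sh: "sh \<in> PSD VI"
  shows "sh \<union> sing \<in> PSD_plus VI"
proof -
  have shs: "sh \<subseteq> SG VI" by (rule PSD_sub[OF fin ne sh])
  have sub: "sh \<union> sing \<subseteq> SG VI"
  proof
    fix S assume "S \<in> sh \<union> sing"
    thus "S \<in> SG VI"
    proof
      assume "S \<in> sh" thus ?thesis using shs by (rule subsetD[rotated])
    next
      assume "S \<in> sing" then obtain x where "x \<in> VI" "S = {x}" unfolding sing_iff by blast
      thus ?thesis using sing_SG[OF fin ne] by simp
    qed
  qed
  have "sh \<union> sing \<in> PSD VI"
  proof (rule PSD_I[OF fin ne sub])
    fix S assume S: "S \<in> SG VI" and w: "wit (sh \<union> sing) S"
    show "S \<in> sh \<union> sing"
    proof (cases "\<exists>x. S = {x}")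
      case True
      then obtain x where x: "S = {x}" by blast
      hence "x \<in> VI" using S by (simp add: SG_def)
      thus ?thesis using x sing_iff by simp
    next
      case False
      have Sne: "S \<noteq> {}" using S by (simp add: SG_def)
      have "\<forall>x\<in>S. \<forall>y\<in>S. x \<noteq> y \<longrightarrow> (\<exists>U\<in>sh. x \<in> U \<and> y \<in> U \<and> U \<subseteq> S)"
      proof (intro ballI impI)
        fix x y assume xy: "x \<in> S" "y \<in> S" "x \<noteq> y"
        obtain U where U: "U \<in> sh \<union> sing" "x \<in> U" "y \<in> U" "U \<subseteq> S" using witD[OF w xy(1,2)] by blast
        have "U \<notin> sing"
        proof
          assume "U \<in> sing" then obtain z where "U = {z}" unfolding sing_iff by blast
          thus False using U(2,3) xy(3) by simp
        qed
        hence "U \<in> sh" using U(1) by simp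
        thus "\<exists>U\<in>sh. x \<in> U \<and> y \<in> U \<and> U \<subseteq> S" using U(2-4) by blast
      qed
      hence "wit sh S" by (rule wit_from_pairs[OF Sne False])
      hence "S \<in> sh" by (rule PSD_cl[OF fin ne sh S])
      thus ?thesis by simp
    qed
  qed
  moreover have "\<forall>x\<in>VI. {x} \<in> sh \<union> sing" using sing_iff by simp
  ultimately show ?thesis unfolding PSD_plus_def by simp
qed

definition Dof :: "'a set set \<Rightarrow> 'a set set" where
  "Dof sh = SG VI - {{x} | x. x \<in> VI \<and> {x} \<notin> sh}"

lemma Dof_mem: "S \<in> Dof sh \<longleftrightarrow> S \<in> SG VI \<and> \<not>(\<exists>x\<in>VI. S = {x} \<and> {x} \<notin> sh)"
  unfolding Dof_def by auto

lemma Dof_E0: "Dof sh \<in> E0 VI"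
  unfolding E0_def
proof (intro CollectI conjI ballI impI)
  show "Dof sh \<subseteq> SG VI" unfolding Dof_def by auto
  fix S assume "S \<in> SG VI" "S \<notin> Dof sh"
  thus "\<exists>x. S = {x}" unfolding Dof_mem by blast
qed

lemma split1:
  assumes sh: "sh \<in> PSD VI"
  shows "S \<in> sh \<longleftrightarrow> S \<in> SG VI \<and> S \<in> Dof sh \<and> S \<in> sh \<union> sing"
proof
  assume S: "S \<in> sh"
  have "S \<in> SG VI" using PSD_sub[OF fin ne sh] S by (rule subsetD)
  moreover have "\<not>(\<exists>x\<in>VI. S = {x} \<and> {x} \<notin> sh)" using S by auto
  ultimately show "S \<in> SG VI \<and> S \<in> Dof sh \<and> S \<in> sh \<union> sing" using S Dof_mem by simp
next
  assume S: "S \<in> SG VI \<and> S \<in> Dof sh \<and> S \<in> sh \<union> sing"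
  show "S \<in> sh"
  proof (cases "S \<in> sh")
    case True thus ?thesis .
  next
    case False
    hence "S \<in> sing" using S by simp
    then obtain x where x: "x \<in> VI" "S = {x}" unfolding sing_iff by blast
    have "\<not>(\<exists>x\<in>VI. S = {x} \<and> {x} \<notin> sh)" using S Dof_mem by simp
    hence "{x} \<in> sh" using x by auto
    thus ?thesis using x by simp
  qed
qed

lemma split2:
  assumes P: "P \<in> PSD_plus VI"
  shows "rho_PS VI P \<in> PS VI" and "insert VI P \<in> PSD_ddag VI"
    and "S \<in> P \<longleftrightarrow> S \<in> SG VI \<and> S \<in> rho_PS VI P \<and> S \<in> insert VI P"
proof -
  have PP: "P \<in> PSD VI" and Ps: "\<forall>x\<in>VI. {x} \<in> P" using P unfolding PSD_plus_def by auto
  have Psub: "P \<subseteq> SG VI" by (rule PSD_sub[OF fin ne PP])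
  show "rho_PS VI P \<in> PS VI" unfolding PS_def SH_def using Psub by simp
  have Rsub: "insert VI P \<subseteq> SG VI" using Psub VI_SG[OF fin ne] by simp
  have "insert VI P \<in> PSD VI"
  proof (rule PSD_I[OF fin ne Rsub])
    fix S assume S: "S \<in> SG VI" and w: "wit (insert VI P) S"
    show "S \<in> insert VI P"
    proof (cases "S = VI")
      case True thus ?thesis by simp
    next
      case False
      have SV: "S \<subseteq> VI" using S by (simp add: SG_def)
      have "wit P S" unfolding wit_def
      proof (intro ballI)
        fix x y assume xy: "x \<in> S" "y \<in> S"
        obtain U where U: "U \<in> insert VI P" "x \<in> U" "y \<in> U" "U \<subseteq> S" using witD[OF w xy] by blast
        have "U \<noteq> VI"
        proof
          assume "U = VI" hence "VI \<subseteq> S" using U(4) by simp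
          hence "S = VI" using SV by (rule equalityI[rotated])
          thus False using False by simp
        qed
        hence "U \<in> P" using U(1) by simp
        thus "\<exists>U\<in>P. x \<in> U \<and> y \<in> U \<and> U \<subseteq> S" using U(2-4) by blast
      qed
      hence "S \<in> P" by (rule PSD_cl[OF fin ne PP S])
      thus ?thesis by simp
    qed
  qed
  moreover have "\<forall>x\<in>VI. {x} \<in> insert VI P" using Ps by simp
  ultimately show "insert VI P \<in> PSD_ddag VI" unfolding PSD_ddag_def by simp
  show "S \<in> P \<longleftrightarrow> S \<in> SG VI \<and> S \<in> rho_PS VI P \<and> S \<in> insert VI P"
  proof
    assume S: "S \<in> P"
    have SG: "S \<in> SG VI" using Psub S by (rule subsetD)
    have "pwit P S" using S unfolding pwit_def by blast
    thus "S \<in> SG VI \<and> S \<in> rho_PS VI P \<and> S \<in> insert VI P" using SG S by (simp add: rho_PS_iff)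
  next
    assume S: "S \<in> SG VI \<and> S \<in> rho_PS VI P \<and> S \<in> insert VI P"
    show "S \<in> P"
    proof (cases "S = VI")
      case False thus ?thesis using S by simp
    next
      case True
      have pw: "pwit P VI" using S True by (simp add: rho_PS_iff)
      have "wit P VI" unfolding wit_def
      proof (intro ballI)
        fix x y assume xy: "x \<in> VI" "y \<in> VI"
        show "\<exists>U\<in>P. x \<in> U \<and> y \<in> U \<and> U \<subseteq> VI"
        proof (cases "x = y")
          case True
          have "{x} \<in> P" using Ps xy(1) by simp
          thus ?thesis using True xy(1) by blast
        next
          case False
          obtain U where U: "U \<in> P" "x \<in> U" "y \<in> U" using pwitD[OF pw xy False] by blast
          have "U \<subseteq> VI" using subsetD[OF Psub U(1)] by (simp add: SG_def)
          thus ?thesis using U by blast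
        qed
      qed
      hence "VI \<in> P" by (rule PSD_cl[OF fin ne PP VI_SG[OF fin ne]])
      thus ?thesis using True by simp
    qed
  qed
qed

end

context
  fixes VI :: "'a set"
  assumes fin: "finite VI" and ne: "VI \<noteq> {}"
begin

lemma decomp3:
  assumes sh: "sh \<in> PSD VI"
  shows "sh = Gl VI {Dof VI sh, rho_PS VI (sh \<union> sing VI), insert VI (sh \<union> sing VI)}"
proof -
  have P: "sh \<union> sing VI \<in> PSD_plus VI" by (rule P_plus[OF fin ne sh])
  show ?thesis
  proof (rule set_eqI)
    fix S
    show "S \<in> sh \<longleftrightarrow> S \<in> Gl VI {Dof VI sh, rho_PS VI (sh \<union> sing VI), insert VI (sh \<union> sing VI)}"
      unfolding Gl_mem[OF fin ne] split1[OF fin ne sh, of S] split2(3)[OF fin ne P, of S] by auto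
  qed
qed

lemma decomp2:
  assumes sh: "sh \<in> PSD VI"
  shows "sh = Gl VI {Dof VI sh, sh \<union> sing VI}"
proof (rule set_eqI)
  fix S
  show "S \<in> sh \<longleftrightarrow> S \<in> Gl VI {Dof VI sh, sh \<union> sing VI}"
    unfolding Gl_mem[OF fin ne] split1[OF fin ne sh, of S] by auto
qed

lemma plus_PSD: "PSD_plus VI \<subseteq> PSD VI"
  unfolding PSD_plus_def by auto

lemma rprod2: "rprod C [A, B] = mclos C (A \<union> B)"
  unfolding rprod_def by simp

lemma rprod3: "rprod C [A, B, D] = mclos C (A \<union> (B \<union> D))"
  unfolding rprod_def by simp

lemma E0_in: "rprod (PSD VI) [PSD_plus VI, E0 VI] = PSD VI"
  unfolding rprod2
proof (rule equalityI)
  have "PSD_plus VI \<union> E0 VI \<subseteq> PSD VI" using plus_PSD E0_PSD[OF fin ne] by simp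
  thus "mclos (PSD VI) (PSD_plus VI \<union> E0 VI) \<subseteq> PSD VI" by (rule mclos_sub[OF fin ne])
  show "PSD VI \<subseteq> mclos (PSD VI) (PSD_plus VI \<union> E0 VI)"
  proof
    fix sh assume sh: "sh \<in> PSD VI"
    have "{Dof VI sh, sh \<union> sing VI} \<subseteq> PSD_plus VI \<union> E0 VI"
      using Dof_E0[OF fin ne] P_plus[OF fin ne sh] by simp
    thus "sh \<in> mclos (PSD VI) (PSD_plus VI \<union> E0 VI)"
      using mclos_iff[OF fin ne \<open>PSD_plus VI \<union> E0 VI \<subseteq> PSD VI\<close>] decomp2[OF sh] by blast
  qed
qed

definition Mx :: "'a \<Rightarrow> 'a set set" where "Mx x = SG VI - {{x}}"

lemma Mx_E0: "Mx x \<in> E0 VI"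
  unfolding E0_def Mx_def by auto

lemma E0_least:
  assumes E: "uco_img (PSD VI) E" and R: "rprod (PSD VI) [PSD_plus VI, E] = PSD VI"
  shows "E0 VI \<subseteq> E"
proof -
  have EC: "E \<subseteq> PSD VI" and Ecl: "\<forall>X. X \<subseteq> E \<longrightarrow> Gl VI X \<in> E"
    using E unfolding uco_iff[OF fin ne] by auto
  have UC: "PSD_plus VI \<union> E \<subseteq> PSD VI" using plus_PSD EC by simp
  have Mx_in: "Mx x \<in> E" if x: "x \<in> VI" for x
  proof -
    have "Mx x \<in> PSD VI" using Mx_E0 E0_PSD[OF fin ne] by (rule subsetD[rotated])
    hence "Mx x \<in> mclos (PSD VI) (PSD_plus VI \<union> E)" using R unfolding rprod2 by simp
    then obtain X where X: "X \<subseteq> PSD_plus VI \<union> E" "Mx x = Gl VI X"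
      using mclos_iff[OF fin ne UC] by blast
    have "{x} \<notin> Gl VI X" using X(2) unfolding Mx_def by auto
    moreover have xs: "{x} \<in> SG VI" by (rule sing_SG[OF fin ne x])
    ultimately obtain e where e: "e \<in> X" "{x} \<notin> e" unfolding Gl_mem[OF fin ne] by blast
    have "e \<notin> PSD_plus VI" using e(2) x unfolding PSD_plus_def by auto
    hence eE: "e \<in> E" using X(1) e(1) by auto
    have esub: "e \<subseteq> SG VI" using PSD_sub[OF fin ne] EC eE by auto
    have ege: "Mx x \<subseteq> e" using X(2) Gl_le[OF fin ne e(1)] by simp
    have "e = Mx x"
    proof (rule equalityI)
      show "e \<subseteq> Mx x" unfolding Mx_def using esub e(2) by auto
      show "Mx x \<subseteq> e" by (rule ege)
    qed
    thus ?thesis using eE by simp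
  qed
  show ?thesis
  proof
    fix D assume D: "D \<in> E0 VI"
    have Dsub: "D \<subseteq> SG VI" and Dn: "\<forall>S\<in>SG VI. S \<notin> D \<longrightarrow> (\<exists>x. S = {x})"
      using D unfolding E0_def by simp_all
    define F where "F = {Mx x | x. x \<in> VI \<and> {x} \<notin> D}"
    have FE: "F \<subseteq> E" unfolding F_def using Mx_in by auto
    have "D = Gl VI F"
    proof (rule set_eqI)
      fix S
      show "S \<in> D \<longleftrightarrow> S \<in> Gl VI F"
      proof
        assume S: "S \<in> D"
        have "\<forall>p\<in>F. S \<in> p"
        proof
          fix p assume "p \<in> F"
          then obtain x where x: "p = Mx x" "{x} \<notin> D" unfolding F_def by blast
          have "S \<noteq> {x}" using x(2) S by auto
          thus "S \<in> p" using x(1) subsetD[OF Dsub S] unfolding Mx_def by simp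
        qed
        thus "S \<in> Gl VI F" using subsetD[OF Dsub S] Gl_mem[OF fin ne] by simp
      next
        assume S: "S \<in> Gl VI F"
        hence SG: "S \<in> SG VI" and all: "\<forall>p\<in>F. S \<in> p" using Gl_mem[OF fin ne] by auto
        show "S \<in> D"
        proof (rule ccontr)
          assume n: "S \<notin> D"
          then obtain x where x: "S = {x}" using Dn SG by blast
          have xV: "x \<in> VI" using SG x by (simp add: SG_def)
          have "Mx x \<in> F" unfolding F_def using xV n x by auto
          hence "S \<in> Mx x" using all by simp
          thus False using x unfolding Mx_def by simp
        qed
      qed
    qed
    thus "D \<in> E" using Ecl FE by simp
  qed
qed

lemma compl: "uco_compl (PSD VI) (PSD_plus VI) = E0 VI"
proof -
  let ?S = "{E. uco_img (PSD VI) E \<and> rprod (PSD VI) [PSD_plus VI, E] = PSD VI}"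
  have E0S: "E0 VI \<in> ?S" using uco_E0[OF fin ne] E0_in by simp
  have P: "uco_img (PSD VI) (E0 VI) \<and> (\<forall>E\<in>?S. uco_le E (E0 VI)) \<and>
        (\<forall>U'. uco_img (PSD VI) U' \<and> (\<forall>E\<in>?S. uco_le E U') \<longrightarrow> uco_le (E0 VI) U')"
  proof (intro conjI allI impI ballI)
    show "uco_img (PSD VI) (E0 VI)" by (rule uco_E0[OF fin ne])
    fix E assume "E \<in> ?S"
    thus "uco_le E (E0 VI)" unfolding uco_le_def using E0_least by simp
  next
    fix U' assume "uco_img (PSD VI) U' \<and> (\<forall>E\<in>?S. uco_le E U')"
    thus "uco_le (E0 VI) U'" using E0S by simp
  qed
  have U: "U = E0 VI" if "uco_img (PSD VI) U \<and> (\<forall>E\<in>?S. uco_le E U) \<and>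
        (\<forall>U'. uco_img (PSD VI) U' \<and> (\<forall>E\<in>?S. uco_le E U') \<longrightarrow> uco_le U U')" for U
  proof (rule equalityI)
    show "U \<subseteq> E0 VI" using that E0S unfolding uco_le_def by simp
    show "E0 VI \<subseteq> U" using that P unfolding uco_le_def by simp
  qed
  show ?thesis unfolding uco_compl_def uco_lub_def
    by (rule the_equality, rule P, rule U)
qed

end

context
  fixes VI :: "'a set"
  assumes fin: "finite VI" and ne: "VI \<noteq> {}"
begin

lemma dd_PSD: "PSD_ddag VI \<subseteq> PSD VI"
  unfolding PSD_ddag_def by auto

lemma decomp_full: "rprod (PSD VI) [E0 VI, PS VI, PSD_ddag VI] = PSD VI"
  unfolding rprod3[OF fin ne]
proof (rule equalityI)
  have U: "E0 VI \<union> (PS VI \<union> PSD_ddag VI) \<subseteq> PSD VI"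
    using E0_PSD[OF fin ne] PS_PSD[OF fin ne] dd_PSD by simp
  thus "mclos (PSD VI) (E0 VI \<union> (PS VI \<union> PSD_ddag VI)) \<subseteq> PSD VI" by (rule mclos_sub[OF fin ne])
  show "PSD VI \<subseteq> mclos (PSD VI) (E0 VI \<union> (PS VI \<union> PSD_ddag VI))"
  proof
    fix sh assume sh: "sh \<in> PSD VI"
    have P: "sh \<union> sing VI \<in> PSD_plus VI" by (rule P_plus[OF fin ne sh])
    have "{Dof VI sh, rho_PS VI (sh \<union> sing VI), insert VI (sh \<union> sing VI)} \<subseteq> E0 VI \<union> (PS VI \<union> PSD_ddag VI)"
      using Dof_E0[OF fin ne] split2(1,2)[OF fin ne P] by simp
    thus "sh \<in> mclos (PSD VI) (E0 VI \<union> (PS VI \<union> PSD_ddag VI))"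
      using mclos_iff[OF fin ne U] decomp3[OF fin ne sh] by blast
  qed
qed

lemma min0:
  assumes E: "uco_img (PSD VI) E" and sub: "E \<subseteq> E0 VI" and neq: "E \<noteq> E0 VI"
  shows "mclos (PSD VI) (E \<union> (PS VI \<union> PSD_ddag VI)) \<noteq> PSD VI"
proof
  assume R: "mclos (PSD VI) (E \<union> (PS VI \<union> PSD_ddag VI)) = PSD VI"
  have EC: "E \<subseteq> PSD VI" using E unfolding uco_iff[OF fin ne] by simp
  have U1: "E \<union> (PS VI \<union> PSD_ddag VI) \<subseteq> PSD VI" using EC PS_PSD[OF fin ne] dd_PSD by simp
  have U2: "PSD_plus VI \<union> E \<subseteq> PSD VI" using EC plus_PSD[OF fin ne] by simp
  have "rprod (PSD VI) [PSD_plus VI, E] = PSD VI"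
    unfolding rprod2[OF fin ne]
  proof (rule equalityI)
    show "mclos (PSD VI) (PSD_plus VI \<union> E) \<subseteq> PSD VI" by (rule mclos_sub[OF fin ne U2])
    show "PSD VI \<subseteq> mclos (PSD VI) (PSD_plus VI \<union> E)"
    proof
      fix sh assume "sh \<in> PSD VI"
      then obtain X where X: "X \<subseteq> E \<union> (PS VI \<union> PSD_ddag VI)" "sh = Gl VI X"
        using R mclos_iff[OF fin ne U1] by blast
      have "E \<union> (PS VI \<union> PSD_ddag VI) \<subseteq> PSD_plus VI \<union> E"
        using PS_plus[OF fin ne] ddag_plus[OF fin ne] by auto
      hence "X \<subseteq> PSD_plus VI \<union> E" using X(1) by (rule order_trans[rotated])
      thus "sh \<in> mclos (PSD VI) (PSD_plus VI \<union> E)" using X(2) mclos_iff[OF fin ne U2] by blast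
    qed
  qed
  hence "E0 VI \<subseteq> E" by (rule E0_least[OF fin ne E])
  thus False using sub neq by simp
qed

lemma cxy_mem: "S \<in> cxy VI x y \<longleftrightarrow> S \<in> SG VI \<and> \<not> {x,y} \<subseteq> S"
  unfolding cxy_def by simp

lemma cxy_PS:
  assumes xy: "x \<noteq> y"
  shows "cxy VI x y \<in> PS VI"
proof (rule PS_I[OF fin ne])
  show "cxy VI x y \<subseteq> SG VI" unfolding cxy_def by auto
  fix S assume S: "S \<in> SG VI" and w: "pwit (cxy VI x y) S"
  show "S \<in> cxy VI x y"
  proof (rule ccontr)
    assume "S \<notin> cxy VI x y"
    hence "{x,y} \<subseteq> S" using S cxy_mem by simp
    then obtain U where "U \<in> cxy VI x y" "x \<in> U" "y \<in> U" using pwitD[OF w _ _ xy] by auto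
    thus False using cxy_mem by simp
  qed
qed

end

context
  fixes VI :: "'a set"
  assumes fin: "finite VI" and ne: "VI \<noteq> {}"
begin

lemma PS_gen:
  assumes E: "uco_img (PSD VI) E" and sub: "E \<subseteq> PS VI" and neq: "E \<noteq> PS VI"
  shows "\<exists>x y. x \<in> VI \<and> y \<in> VI \<and> x \<noteq> y \<and> cxy VI x y \<notin> E"
proof (rule ccontr)
  assume "\<not> ?thesis"
  hence call: "\<And>x y. x \<in> VI \<Longrightarrow> y \<in> VI \<Longrightarrow> x \<noteq> y \<Longrightarrow> cxy VI x y \<in> E" by blast
  have Ecl: "\<forall>X. X \<subseteq> E \<longrightarrow> Gl VI X \<in> E" using E unfolding uco_iff[OF fin ne] by simp
  have "PS VI \<subseteq> E"
  proof
    fix p assume p: "p \<in> PS VI"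
    have psub: "p \<subseteq> SG VI" by (rule PS_sub[OF fin ne p])
    define F where "F = {cxy VI x y | x y. x \<in> VI \<and> y \<in> VI \<and> x \<noteq> y \<and> \<not>(\<exists>U\<in>p. x \<in> U \<and> y \<in> U)}"
    have FE: "F \<subseteq> E" unfolding F_def using call by auto
    have "p = Gl VI F"
    proof (rule set_eqI)
      fix S
      show "S \<in> p \<longleftrightarrow> S \<in> Gl VI F"
      proof
        assume S: "S \<in> p"
        have SG: "S \<in> SG VI" using psub S by (rule subsetD)
        have "\<forall>c\<in>F. S \<in> c"
        proof
          fix c assume "c \<in> F"
          then obtain x y where c: "c = cxy VI x y" "\<not>(\<exists>U\<in>p. x \<in> U \<and> y \<in> U)"
            unfolding F_def by blast
          have "\<not> {x,y} \<subseteq> S" using c(2) S by auto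
          thus "S \<in> c" using c(1) SG cxy_mem[OF fin ne] by simp
        qed
        thus "S \<in> Gl VI F" using SG Gl_mem[OF fin ne] by simp
      next
        assume S: "S \<in> Gl VI F"
        hence SG: "S \<in> SG VI" and all: "\<forall>c\<in>F. S \<in> c" using Gl_mem[OF fin ne] by auto
        have SV: "S \<subseteq> VI" using SG by (simp add: SG_def)
        have "pwit p S" unfolding pwit_def
        proof (intro ballI impI)
          fix x y assume xy: "x \<in> S" "y \<in> S" "x \<noteq> y"
          show "\<exists>U\<in>p. x \<in> U \<and> y \<in> U"
          proof (rule ccontr)
            assume n: "\<not> (\<exists>U\<in>p. x \<in> U \<and> y \<in> U)"
            have "x \<in> VI" "y \<in> VI" using SV xy by auto
            hence "cxy VI x y \<in> F" unfolding F_def using n xy(3) by blast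
            hence "S \<in> cxy VI x y" using all by simp
            thus False using xy cxy_mem[OF fin ne] by simp
          qed
        qed
        thus "S \<in> p" by (rule PS_cl[OF fin ne p SG])
      qed
    qed
    thus "p \<in> E" using Ecl FE by simp
  qed
  thus False using sub neq by simp
qed

lemma min1:
  assumes E: "uco_img (PSD VI) E" and sub: "E \<subseteq> PS VI" and neq: "E \<noteq> PS VI"
  shows "mclos (PSD VI) (E0 VI \<union> (E \<union> PSD_ddag VI)) \<noteq> PSD VI"
proof
  assume R: "mclos (PSD VI) (E0 VI \<union> (E \<union> PSD_ddag VI)) = PSD VI"
  obtain x y where xy: "x \<in> VI" "y \<in> VI" "x \<noteq> y" "cxy VI x y \<notin> E"
    using PS_gen[OF E sub neq] by blast
  let ?c = "cxy VI x y"
  have EC: "E \<subseteq> PSD VI" using E unfolding uco_iff[OF fin ne] by simp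
  have U: "E0 VI \<union> (E \<union> PSD_ddag VI) \<subseteq> PSD VI"
    using EC E0_PSD[OF fin ne] dd_PSD[OF fin ne] by simp
  have cPS: "?c \<in> PS VI" by (rule cxy_PS[OF fin ne xy(3)])
  have "?c \<in> PSD VI" using cPS PS_PSD[OF fin ne] by (rule subsetD[rotated])
  then obtain X where X: "X \<subseteq> E0 VI \<union> (E \<union> PSD_ddag VI)" "?c = Gl VI X"
    using R mclos_iff[OF fin ne U] by blast
  have VIe: "VI \<in> e" if e: "e \<in> X" for e
  proof -
    have ce: "?c \<subseteq> e" using X(2) Gl_le[OF fin ne e] by simp
    have "e \<in> E0 VI \<or> e \<in> E \<or> e \<in> PSD_ddag VI" using X(1) e by auto
    thus ?thesis
    proof (elim disjE)
      assume e0: "e \<in> E0 VI"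
      show ?thesis
      proof (rule ccontr)
        assume "VI \<notin> e"
        then obtain z where z: "VI = {z}" using e0 VI_SG[OF fin ne] unfolding E0_def by blast
        thus False using xy by simp
      qed
    next
      assume "e \<in> PSD_ddag VI" thus ?thesis unfolding PSD_ddag_def by simp
    next
      assume eE: "e \<in> E"
      have eP: "e \<in> PS VI" using sub eE by (rule subsetD)
      show ?thesis
      proof (cases "\<exists>U\<in>e. x \<in> U \<and> y \<in> U")
        case True
        then obtain U where U: "U \<in> e" "x \<in> U" "y \<in> U" by blast
        have "pwit e VI" unfolding pwit_def
        proof (intro ballI impI)
          fix a b assume ab: "a \<in> VI" "b \<in> VI" "a \<noteq> b"
          show "\<exists>U\<in>e. a \<in> U \<and> b \<in> U"
          proof (cases "{x,y} \<subseteq> {a,b}")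
            case True
            hence "{a,b} = {x,y}" using xy(3) ab(3) by auto
            hence "a \<in> U" "b \<in> U" using U(2,3) by auto
            thus ?thesis using U(1) by blast
          next
            case False
            have "{a,b} \<in> SG VI" using ab by (simp add: SG_def)
            hence "{a,b} \<in> ?c" unfolding cxy_mem[OF fin ne] using False by simp
            hence "{a,b} \<in> e" using ce by (rule subsetD[rotated])
            thus ?thesis by blast
          qed
        qed
        thus ?thesis by (rule PS_cl[OF fin ne eP VI_SG[OF fin ne]])
      next
        case False
        have "e \<subseteq> ?c"
        proof
          fix S assume S: "S \<in> e"
          have "S \<in> SG VI" using PS_sub[OF fin ne eP] S by (rule subsetD)
          moreover have "\<not> {x,y} \<subseteq> S" using False S by auto
          ultimately show "S \<in> ?c" using cxy_mem[OF fin ne] by simp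
        qed
        hence "e = ?c" using ce by (rule equalityI)
        thus ?thesis using eE xy(4) by simp
      qed
    qed
  qed
  have "VI \<in> Gl VI X" using VIe VI_SG[OF fin ne] Gl_mem[OF fin ne] by simp
  hence "VI \<in> ?c" using X(2) by simp
  thus False using xy(1,2) cxy_mem[OF fin ne] by simp
qed

lemma min2:
  assumes E: "uco_img (PSD VI) E" and sub: "E \<subseteq> PSD_ddag VI" and neq: "E \<noteq> PSD_ddag VI"
  shows "mclos (PSD VI) (E0 VI \<union> (PS VI \<union> E)) \<noteq> PSD VI"
proof
  assume R: "mclos (PSD VI) (E0 VI \<union> (PS VI \<union> E)) = PSD VI"
  have EC: "E \<subseteq> PSD VI" and Ecl: "\<forall>X. X \<subseteq> E \<longrightarrow> Gl VI X \<in> E"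
    using E unfolding uco_iff[OF fin ne] by auto
  have U: "E0 VI \<union> (PS VI \<union> E) \<subseteq> PSD VI"
    using EC E0_PSD[OF fin ne] PS_PSD[OF fin ne] by simp
  have "PSD_ddag VI \<subseteq> E"
  proof
    fix t assume t: "t \<in> PSD_ddag VI"
    have tC: "t \<in> PSD VI" and tV: "VI \<in> t" and ts: "\<forall>x\<in>VI. {x} \<in> t"
      using t unfolding PSD_ddag_def by auto
    obtain X where X: "X \<subseteq> E0 VI \<union> (PS VI \<union> E)" "t = Gl VI X"
      using R mclos_iff[OF fin ne U] tC by blast
    have big: "SG VI \<subseteq> p" if p: "p \<in> X" "p \<notin> E" for p
    proof
      fix S assume S: "S \<in> SG VI"
      have tp: "t \<subseteq> p" using X(2) Gl_le[OF fin ne p(1)] by simp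
      have "p \<in> E0 VI \<or> p \<in> PS VI" using X(1) p by auto
      thus "S \<in> p"
      proof
        assume p0: "p \<in> E0 VI"
        show "S \<in> p"
        proof (rule ccontr)
          assume "S \<notin> p"
          then obtain z where z: "S = {z}" using p0 S unfolding E0_def by blast
          have "z \<in> VI" using S z by (simp add: SG_def)
          hence "{z} \<in> p" using ts tp by auto
          thus False using z \<open>S \<notin> p\<close> by simp
        qed
      next
        assume pP: "p \<in> PS VI"
        have VIp: "VI \<in> p" using tV tp by auto
        have SV: "S \<subseteq> VI" using S by (simp add: SG_def)
        have "pwit p S" unfolding pwit_def using VIp SV by blast
        thus "S \<in> p" by (rule PS_cl[OF fin ne pP S])
      qed
    qed
    have "t = Gl VI (X \<inter> E)"
    proof (rule set_eqI)
      fix S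
      show "S \<in> t \<longleftrightarrow> S \<in> Gl VI (X \<inter> E)"
      proof
        assume "S \<in> t"
        thus "S \<in> Gl VI (X \<inter> E)" using X(2) Gl_mem[OF fin ne] by simp
      next
        assume S: "S \<in> Gl VI (X \<inter> E)"
        hence SG: "S \<in> SG VI" and all: "\<forall>p\<in>X \<inter> E. S \<in> p" using Gl_mem[OF fin ne] by auto
        have "\<forall>p\<in>X. S \<in> p"
        proof
          fix p assume p: "p \<in> X"
          show "S \<in> p"
          proof (cases "p \<in> E")
            case True thus ?thesis using all p by simp
          next
            case False show ?thesis using subsetD[OF big[OF p False] SG] .
          qed
        qed
        thus "S \<in> t" using X(2) SG Gl_mem[OF fin ne] by simp
      qed
    qed
    moreover have "Gl VI (X \<inter> E) \<in> E" using Ecl by simp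
    ultimately show "t \<in> E" by simp
  qed
  thus False using sub neq by simp
qed

end

theorem corollary5p3:
  fixes VI :: "'a set"
  assumes "finite VI" and "VI \<noteq> {}"
  shows "min_decomposition (PSD VI)
           [uco_compl (PSD VI) (PSD_plus VI), PS VI, PSD_ddag VI]"
proof -
  note fin = assms(1) and ne = assms(2)
  have c: "uco_compl (PSD VI) (PSD_plus VI) = E0 VI" by (rule compl[OF fin ne])
  have dec: "decomposition (PSD VI) [E0 VI, PS VI, PSD_ddag VI]"
    unfolding decomposition_def
    using uco_E0[OF fin ne] uco_PS[OF fin ne] uco_ddag[OF fin ne] decomp_full[OF fin ne] by simp
  have EC: "E \<subseteq> PSD VI" if "uco_img (PSD VI) E" for E using that unfolding uco_iff[OF fin ne] by simp
  have m: "uco_less (PSD VI) (rprod (PSD VI) ([E0 VI, PS VI, PSD_ddag VI][i := E]))"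
    if i: "i < 3" and E: "uco_img (PSD VI) E" and l: "uco_less ([E0 VI, PS VI, PSD_ddag VI] ! i) E" for i E
  proof -
    have "i = 0 \<or> i = 1 \<or> i = 2" using i by auto
    thus ?thesis
    proof (elim disjE)
      assume i0: "i = 0"
      have "E \<subseteq> E0 VI" "E \<noteq> E0 VI" using l i0 unfolding uco_less_def uco_le_def by auto
      hence ne0: "mclos (PSD VI) (E \<union> (PS VI \<union> PSD_ddag VI)) \<noteq> PSD VI" by (rule min0[OF fin ne E])
      have "E \<union> (PS VI \<union> PSD_ddag VI) \<subseteq> PSD VI"
        using EC[OF E] PS_PSD[OF fin ne] dd_PSD[OF fin ne] by simp
      hence "mclos (PSD VI) (E \<union> (PS VI \<union> PSD_ddag VI)) \<subseteq> PSD VI" by (rule mclos_sub[OF fin ne])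
      moreover have "rprod (PSD VI) ([E0 VI, PS VI, PSD_ddag VI][i := E]) = mclos (PSD VI) (E \<union> (PS VI \<union> PSD_ddag VI))"
        using i0 by (simp add: rprod3[OF fin ne])
      ultimately show ?thesis using ne0 unfolding uco_less_def uco_le_def by auto
    next
      assume i1: "i = 1"
      have "E \<subseteq> PS VI" "E \<noteq> PS VI" using l i1 unfolding uco_less_def uco_le_def by auto
      hence ne1: "mclos (PSD VI) (E0 VI \<union> (E \<union> PSD_ddag VI)) \<noteq> PSD VI" by (rule min1[OF fin ne E])
      have "E0 VI \<union> (E \<union> PSD_ddag VI) \<subseteq> PSD VI"
        using EC[OF E] E0_PSD[OF fin ne] dd_PSD[OF fin ne] by simp
      hence "mclos (PSD VI) (E0 VI \<union> (E \<union> PSD_ddag VI)) \<subseteq> PSD VI" by (rule mclos_sub[OF fin ne])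
      moreover have "rprod (PSD VI) ([E0 VI, PS VI, PSD_ddag VI][i := E]) = mclos (PSD VI) (E0 VI \<union> (E \<union> PSD_ddag VI))"
        using i1 by (simp add: rprod3[OF fin ne])
      ultimately show ?thesis using ne1 unfolding uco_less_def uco_le_def by auto
    next
      assume i2: "i = 2"
      have "E \<subseteq> PSD_ddag VI" "E \<noteq> PSD_ddag VI" using l i2 unfolding uco_less_def uco_le_def by auto
      hence ne2: "mclos (PSD VI) (E0 VI \<union> (PS VI \<union> E)) \<noteq> PSD VI" by (rule min2[OF fin ne E])
      have "E0 VI \<union> (PS VI \<union> E) \<subseteq> PSD VI"
        using EC[OF E] E0_PSD[OF fin ne] PS_PSD[OF fin ne] by simp
      hence "mclos (PSD VI) (E0 VI \<union> (PS VI \<union> E)) \<subseteq> PSD VI" by (rule mclos_sub[OF fin ne])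
      moreover have "rprod (PSD VI) ([E0 VI, PS VI, PSD_ddag VI][i := E]) = mclos (PSD VI) (E0 VI \<union> (PS VI \<union> E))"
        using i2 by (simp add: rprod3[OF fin ne])
      ultimately show ?thesis using ne2 unfolding uco_less_def uco_le_def by auto
    qed
  qed
  show ?thesis unfolding c min_decomposition_def using dec m by simp
qed

end
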